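(* Let $F$ be a graph of diameter $2$, $n=|V(F)|$, $t=\delta(F)$, and let $l>n$ be an integer. If $C_{l-2}^{n-2}>n!\,C_{l-2}^{n-t-2}$, then $0<\delta_l<z_{i+1}-z_i$ for every $i\in\{t+1,t+2,\dots,l-1\}$.
   Context: All graphs are simple, finite, undirected. The $F$-degree of a vertex $v$ in $G$ is the number of subgraphs of $G$ (not necessarily induced) isomorphic to $F$ and containing $v$. $A_{2l-1}$ is the graph with vertex set $\{1,\dots,2l-1\}$ in which distinct $i,j$ are adjacent iff $|i-j|\le l-1$; $F_{2l}$ is obtained from $A_{2l-1}$ by adding a new vertex $2l$ joined exactly to $1,\dots,t$. $z_i$ is the $F$-degree of $i$ in $A_{2l-1}$, $f_i$ the $F$-degree of $i$ in $F_{2l}$, and $\delta_i=f_i-z_i$. $C_m^k=\frac{m!}{k!(m-k)!}$ for integers $m\ge k\ge 0$, and $C_m^k=0$ otherwise. *)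

theory Defs
  imports Main
begin

type_synonym 'a sgraph = "'a set \<times> 'a set set"

definition verts :: "'a sgraph \<Rightarrow> 'a set" where "verts G = fst G"
definition edges :: "'a sgraph \<Rightarrow> 'a set set" where "edges G = snd G"

definition simple_graph :: "'a sgraph \<Rightarrow> bool" where
  "simple_graph G \<longleftrightarrow> finite (verts G) \<and>
     (\<forall>e\<in>edges G. e \<subseteq> verts G \<and> card e = 2)"

definition gdegree :: "'a sgraph \<Rightarrow> 'a \<Rightarrow> nat" where
  "gdegree G v = card {u \<in> verts G. {v, u} \<in> edges G}"

definition min_degree :: "'a sgraph \<Rightarrow> nat" where
  "min_degree G = Min (gdegree G ` verts G)"

definition is_walk :: "'a sgraph \<Rightarrow> 'a list \<Rightarrow> bool" where
  "is_walk G xs \<longleftrightarrow> xs \<noteq> [] \<and> set xs \<subseteq> verts G \<and>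
     (\<forall>i. Suc i < length xs \<longrightarrow> {xs ! i, xs ! Suc i} \<in> edges G)"

definition walk_of_len :: "'a sgraph \<Rightarrow> 'a \<Rightarrow> 'a \<Rightarrow> nat \<Rightarrow> bool" where
  "walk_of_len G u v k \<longleftrightarrow> (\<exists>xs. is_walk G xs \<and> hd xs = u \<and> last xs = v \<and> length xs = Suc k)"

definition gdist :: "'a sgraph \<Rightarrow> 'a \<Rightarrow> 'a \<Rightarrow> nat" where
  "gdist G u v = (LEAST k. walk_of_len G u v k)"

definition connected_graph :: "'a sgraph \<Rightarrow> bool" where
  "connected_graph G \<longleftrightarrow> verts G \<noteq> {} \<and>
     (\<forall>u\<in>verts G. \<forall>v\<in>verts G. \<exists>k. walk_of_len G u v k)"

definition diameter :: "'a sgraph \<Rightarrow> nat" where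
  "diameter G = Max {gdist G u v | u v. u \<in> verts G \<and> v \<in> verts G}"

definition isomorphic :: "'a sgraph \<Rightarrow> 'b sgraph \<Rightarrow> bool" where
  "isomorphic F H \<longleftrightarrow> (\<exists>f. bij_betw f (verts F) (verts H) \<and>
     (\<forall>x\<in>verts F. \<forall>y\<in>verts F. {x, y} \<in> edges F \<longleftrightarrow> {f x, f y} \<in> edges H))"

definition subgraph_of :: "'b sgraph \<Rightarrow> 'b sgraph \<Rightarrow> bool" where
  "subgraph_of H G \<longleftrightarrow> verts H \<subseteq> verts G \<and> edges H \<subseteq> edges G \<and>
     (\<forall>e\<in>edges H. e \<subseteq> verts H)"

definition Fdeg :: "'a sgraph \<Rightarrow> 'b sgraph \<Rightarrow> 'b \<Rightarrow> nat" where
  "Fdeg F G v = card {H. subgraph_of H G \<and> isomorphic F H \<and> v \<in> verts H}"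

text \<open>A_{2l-1}: vertices 1..2l-1, i~j iff |i-j| <= l-1\<close>
definition A_graph :: "nat \<Rightarrow> nat sgraph" where
  "A_graph l = ({1..2*l-1},
     {{i, j} | i j. i \<in> {1..2*l-1} \<and> j \<in> {1..2*l-1} \<and> i \<noteq> j \<and>
        i - j \<le> l - 1 \<and> j - i \<le> l - 1})"

definition F_graph :: "nat \<Rightarrow> nat \<Rightarrow> nat sgraph" where
  "F_graph l t = (insert (2*l) (verts (A_graph l)),
     edges (A_graph l) \<union> {{2*l, j} | j. j \<in> {1..t}})"

definition Cb :: "int \<Rightarrow> int \<Rightarrow> nat" where
  "Cb m k = (if 0 \<le> k \<and> k \<le> m then nat m choose nat k else 0)"

end

theory Submission
  imports Defs "HOL-Combinatorics.Permutations"
begin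

definition gmap :: "('a \<Rightarrow> 'b) \<Rightarrow> 'a sgraph \<Rightarrow> 'b sgraph" where
  "gmap \<phi> F = (\<phi> ` verts F, (\<lambda>e. \<phi> ` e) ` edges F)"

definition emb :: "'a sgraph \<Rightarrow> 'b sgraph \<Rightarrow> ('a \<Rightarrow> 'b) \<Rightarrow> bool" where
  "emb F G \<phi> \<longleftrightarrow> inj_on \<phi> (verts F) \<and> \<phi> ` verts F \<subseteq> verts G \<and> (\<forall>e\<in>edges F. \<phi> ` e \<in> edges G)"

lemma verts_gmap[simp]: "verts (gmap \<phi> F) = \<phi> ` verts F"
  by (simp add: gmap_def verts_def)
lemma edges_gmap[simp]: "edges (gmap \<phi> F) = (\<lambda>e. \<phi> ` e) ` edges F"
  by (simp add: gmap_def edges_def)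

lemma sgraph_eq: "verts H = verts H' \<Longrightarrow> edges H = edges H' \<Longrightarrow> H = H'"
  by (simp add: verts_def edges_def prod_eq_iff)

lemma gmap_comp: "gmap \<sigma> (gmap \<phi> F) = gmap (\<sigma> \<circ> \<phi>) F"
  by (rule sgraph_eq) (auto simp: image_comp)

lemma gmap_cong:
  assumes "simple_graph F" "\<And>x. x \<in> verts F \<Longrightarrow> \<phi> x = \<psi> x"
  shows "gmap \<phi> F = gmap \<psi> F"
proof (rule sgraph_eq)
  show "verts (gmap \<phi> F) = verts (gmap \<psi> F)" unfolding verts_gmap by (rule image_cong[OF refl assms(2)])
  have "\<phi> ` e = \<psi> ` e" if e: "e \<in> edges F" for e
  proof -
    have "e \<subseteq> verts F" using assms(1) e by (simp add: simple_graph_def)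
    then show ?thesis using assms(2) by (intro image_cong) auto
  qed
  then show "edges (gmap \<phi> F) = edges (gmap \<psi> F)" unfolding edges_gmap by (rule image_cong[OF refl]) simp
qed

lemma card2_edge: "card e = 2 \<Longrightarrow> \<exists>x y. e = {x, y} \<and> x \<noteq> y"
  by (simp add: card_2_iff)

lemma copies_char:
  assumes sF: "simple_graph F" and sG: "\<forall>e\<in>edges G. card e = 2"
  shows "(subgraph_of H G \<and> isomorphic F H) \<longleftrightarrow> (\<exists>\<phi>. emb F G \<phi> \<and> H = gmap \<phi> F)"
proof
  assume "subgraph_of H G \<and> isomorphic F H"
  then have sub: "subgraph_of H G" and iso: "isomorphic F H" by auto
  obtain f where bij: "bij_betw f (verts F) (verts H)"
    and ed: "\<forall>x\<in>verts F. \<forall>y\<in>verts F. {x, y} \<in> edges F \<longleftrightarrow> {f x, f y} \<in> edges H"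
    using iso unfolding isomorphic_def by blast
  have injf: "inj_on f (verts F)" and imf: "f ` verts F = verts H"
    using bij by (auto simp: bij_betw_def)
  have eF: "\<And>e. e \<in> edges F \<Longrightarrow> \<exists>x y. e = {x,y} \<and> x \<noteq> y \<and> x \<in> verts F \<and> y \<in> verts F"
    using sF unfolding simple_graph_def by (metis card2_edge insert_subset)
  have "emb F G f"
    unfolding emb_def
  proof (intro conjI ballI injf)
    show "f ` verts F \<subseteq> verts G" using imf sub by (simp add: subgraph_of_def)
    fix e assume "e \<in> edges F"
    then obtain x y where "e = {x,y}" "x \<in> verts F" "y \<in> verts F" using eF by blast
    then show "f ` e \<in> edges G" using ed \<open>e \<in> edges F\<close> sub by (auto simp: subgraph_of_def)
  qed
  moreover have "H = gmap f F"
  proof (rule sgraph_eq)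
    show "verts H = verts (gmap f F)" using imf by simp
    show "edges H = edges (gmap f F)"
    proof
      show "edges H \<subseteq> edges (gmap f F)"
      proof
        fix e' assume e': "e' \<in> edges H"
        then have "card e' = 2" "e' \<subseteq> verts H" using sub sG by (auto simp: subgraph_of_def)
        then obtain a b where ab: "e' = {a,b}" "a \<in> verts H" "b \<in> verts H"
          by (metis card2_edge insert_subset)
        then obtain x y where xy: "x \<in> verts F" "y \<in> verts F" "a = f x" "b = f y"
          using imf by blast
        then have "{x,y} \<in> edges F" using ed e' ab by auto
        moreover have "e' = f ` {x,y}" using ab xy by simp
        ultimately show "e' \<in> edges (gmap f F)" unfolding edges_gmap by (rule rev_image_eqI)
      qed
      show "edges (gmap f F) \<subseteq> edges H"
      proof
        fix e' assume "e' \<in> edges (gmap f F)"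
        then obtain e where "e \<in> edges F" "e' = f ` e" by auto
        then obtain x y where "e = {x,y}" "x \<in> verts F" "y \<in> verts F" using eF by blast
        then show "e' \<in> edges H" using ed \<open>e \<in> edges F\<close> \<open>e' = f ` e\<close> by auto
      qed
    qed
  qed
  ultimately show "\<exists>\<phi>. emb F G \<phi> \<and> H = gmap \<phi> F" by blast
next
  assume "\<exists>\<phi>. emb F G \<phi> \<and> H = gmap \<phi> F"
  then obtain \<phi> where em: "emb F G \<phi>" and H: "H = gmap \<phi> F" by blast
  have inj: "inj_on \<phi> (verts F)" using em by (simp add: emb_def)
  have esub: "\<And>e. e \<in> edges F \<Longrightarrow> e \<subseteq> verts F" using sF by (simp add: simple_graph_def)
  have "subgraph_of H G"
    using em esub unfolding H subgraph_of_def emb_def by auto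
  moreover have "isomorphic F H"
    unfolding isomorphic_def
  proof (intro exI conjI ballI)
    show "bij_betw \<phi> (verts F) (verts H)" using inj H by (simp add: bij_betw_def)
    fix x y assume xy: "x \<in> verts F" "y \<in> verts F"
    show "{x, y} \<in> edges F \<longleftrightarrow> {\<phi> x, \<phi> y} \<in> edges H"
    proof
      assume "{x,y} \<in> edges F" then show "{\<phi> x, \<phi> y} \<in> edges H"
        unfolding H by (auto intro: image_eqI[where x="{x,y}"])
    next
      assume "{\<phi> x, \<phi> y} \<in> edges H"
      then obtain e where e: "e \<in> edges F" "\<phi> ` e = \<phi> ` {x,y}" unfolding H by auto
      then have "e = {x,y}" using inj esub[OF e(1)] xy
        by (metis empty_subsetI inj_on_image_eq_iff insert_subset)
      then show "{x,y} \<in> edges F" using e by simp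
    qed
  qed
  ultimately show "subgraph_of H G \<and> isomorphic F H" by blast
qed

lemma finite_subgraphs:
  assumes "simple_graph G"
  shows "finite {H. subgraph_of H G \<and> P H}"
proof -
  have fin: "finite (verts G)" using assms by (simp add: simple_graph_def)
  have "edges G \<subseteq> Pow (verts G)" using assms by (auto simp: simple_graph_def)
  then have fE: "finite (edges G)" using fin by (meson finite_Pow_iff finite_subset)
  have "{H. subgraph_of H G \<and> P H} \<subseteq> Pow (verts G) \<times> Pow (edges G)"
    by (auto simp: subgraph_of_def verts_def edges_def)
  then show ?thesis using fin fE by (meson finite_Pow_iff finite_SigmaI finite_subset)
qed

lemma copies_fixed_verts:
  assumes sF: "simple_graph F" and sG: "\<forall>e\<in>edges G. card e = 2"
    and fS: "finite S" and cS: "card S = card (verts F)"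
  shows "card {H. subgraph_of H G \<and> isomorphic F H \<and> verts H = S} \<le> fact (card S)"
proof -
  have fV: "finite (verts F)" using sF by (simp add: simple_graph_def)
  obtain g where g: "bij_betw g (verts F) S" using finite_same_card_bij[OF fV fS] cS by metis
  let ?M = "\<lambda>\<pi>. gmap (\<pi> \<circ> g) F"
  have "{H. subgraph_of H G \<and> isomorphic F H \<and> verts H = S} \<subseteq> ?M ` {\<pi>. \<pi> permutes S}"
  proof
    fix H assume "H \<in> {H. subgraph_of H G \<and> isomorphic F H \<and> verts H = S}"
    then have H1: "subgraph_of H G \<and> isomorphic F H" and vH: "verts H = S" by auto
    obtain \<phi> where em: "emb F G \<phi>" and H: "H = gmap \<phi> F"
      using copies_char[OF sF sG] H1 by blast
    have bphi: "bij_betw \<phi> (verts F) S" using em vH H by (simp add: emb_def bij_betw_def)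
    define \<pi> where "\<pi> = (\<lambda>s. if s \<in> S then \<phi> (inv_into (verts F) g s) else s)"
    have "bij_betw (\<phi> \<circ> inv_into (verts F) g) S S"
      using bij_betw_trans[OF bij_betw_inv_into[OF g] bphi] .
    then have "bij_betw \<pi> S S"
      by (rule bij_betw_cong[THEN iffD1, rotated]) (simp add: \<pi>_def)
    then have "\<pi> permutes S" by (rule bij_imp_permutes) (simp add: \<pi>_def)
    moreover have "H = ?M \<pi>"
      unfolding H
    proof (rule gmap_cong[OF sF])
      fix x assume x: "x \<in> verts F"
      then have "g x \<in> S" using g by (auto simp: bij_betw_def)
      then show "\<phi> x = (\<pi> \<circ> g) x" using x g
        by (simp add: \<pi>_def bij_betw_def)
    qed
    ultimately show "H \<in> ?M ` {\<pi>. \<pi> permutes S}" by blast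
  qed
  then have "card {H. subgraph_of H G \<and> isomorphic F H \<and> verts H = S} \<le> card (?M ` {\<pi>. \<pi> permutes S})"
    by (rule card_mono[rotated]) (simp add: finite_permutations fS)
  also have "\<dots> \<le> card {\<pi>. \<pi> permutes S}" by (rule card_image_le) (simp add: finite_permutations fS)
  also have "\<dots> = fact (card S)" using card_permutations fS by blast
  finally show ?thesis .
qed

lemma verts_A[simp]: "verts (A_graph l) = {1..2*l-1}"
  by (simp add: A_graph_def verts_def)

lemma edges_A: "edges (A_graph l) = {{i, j} | i j. i \<in> {1..2*l-1} \<and> j \<in> {1..2*l-1} \<and> i \<noteq> j \<and>
        i - j \<le> l - 1 \<and> j - i \<le> l - 1}"
  by (simp add: A_graph_def edges_def)

lemma A_edge_iff: "{a,b} \<in> edges (A_graph l) \<longleftrightarrow>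
   a \<in> {1..2*l-1} \<and> b \<in> {1..2*l-1} \<and> a \<noteq> b \<and> a - b \<le> l - 1 \<and> b - a \<le> l - 1"
  unfolding edges_A by (auto simp: doubleton_eq_iff)

lemma A_edge_cases: "e \<in> edges (A_graph l) \<Longrightarrow> \<exists>a b. e = {a,b} \<and> {a,b} \<in> edges (A_graph l)"
  unfolding edges_A by blast

lemma simple_A: "simple_graph (A_graph l)"
  unfolding simple_graph_def by (auto simp: edges_A)

lemma verts_Fg[simp]: "verts (F_graph l t) = insert (2*l) {1..2*l-1}"
  by (simp add: F_graph_def verts_def A_graph_def)

lemma edges_Fg: "edges (F_graph l t) = edges (A_graph l) \<union> {{2*l, j} | j. j \<in> {1..t}}"
  by (simp add: F_graph_def edges_def)

lemma simple_Fg: assumes "t < l" shows "simple_graph (F_graph l t)"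
  using assms unfolding simple_graph_def by (auto simp: edges_Fg edges_A)

lemma card2_A: "\<forall>e\<in>edges (A_graph l). card e = 2"
  using simple_A by (simp add: simple_graph_def)

lemma card2_Fg: "t < l \<Longrightarrow> \<forall>e\<in>edges (F_graph l t). card e = 2"
  using simple_Fg by (simp add: simple_graph_def)

lemma no_loop: "simple_graph F \<Longrightarrow> {x} \<notin> edges F"
  unfolding simple_graph_def by fastforce

lemma walk_least:
  assumes "walk_of_len F u v k" shows "gdist F u v \<le> k"
  using assms unfolding gdist_def by (rule Least_le)

lemma walk_len_le2:
  assumes "walk_of_len F u v k" "k \<le> 2"
  shows "u = v \<or> {u,v} \<in> edges F \<or> (\<exists>x\<in>verts F. {u,x}\<in>edges F \<and> {x,v}\<in>edges F)"
proof -
  obtain xs where w: "is_walk F xs" "hd xs = u" "last xs = v" "length xs = Suc k"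
    using assms unfolding walk_of_len_def by blast
  have k: "k = 0 \<or> k = 1 \<or> k = 2" using assms(2) by auto
  moreover
  { assume "k = 0" then obtain a where "xs = [a]" using w(4) by (auto simp: length_Suc_conv)
    then have ?thesis using w by simp }
  moreover
  { assume "k = 1" then obtain a b where "xs = [a,b]" using w(4) by (auto simp: length_Suc_conv numeral_2_eq_2)
    then have "{xs!0, xs!Suc 0} \<in> edges F" using w(1) unfolding is_walk_def by auto
    then have ?thesis using w \<open>xs = [a,b]\<close> by simp }
  moreover
  { assume "k = 2" then obtain a b c where xs: "xs = [a,b,c]" using w(4)
      by (auto simp: length_Suc_conv numeral_2_eq_2)
    then have "{xs!0, xs!Suc 0} \<in> edges F" "{xs!1, xs!Suc 1} \<in> edges F" "b \<in> verts F"
      using w(1) unfolding is_walk_def by auto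
    then have ?thesis using w xs by auto }
  ultimately show ?thesis by blast
qed

lemma diam_facts:
  assumes s: "simple_graph F" and c: "connected_graph F" and d: "diameter F = 2"
  shows "\<And>u v. u \<in> verts F \<Longrightarrow> v \<in> verts F \<Longrightarrow>
            u = v \<or> {u,v} \<in> edges F \<or> (\<exists>x\<in>verts F. {u,x}\<in>edges F \<and> {x,v}\<in>edges F)"
    and "\<exists>u\<in>verts F. \<exists>v\<in>verts F. u \<noteq> v \<and> {u,v} \<notin> edges F"
proof -
  let ?D = "{gdist F u v | u v. u \<in> verts F \<and> v \<in> verts F}"
  have fV: "finite (verts F)" using s by (simp add: simple_graph_def)
  have "?D = (\<lambda>(u,v). gdist F u v) ` (verts F \<times> verts F)" by auto
  then have fD: "finite ?D" using fV by simp
  have ne: "verts F \<noteq> {}" using c by (simp add: connected_graph_def)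
  then have neD: "?D \<noteq> {}" by auto
  {
    fix u v assume uv: "u \<in> verts F" "v \<in> verts F"
    have "gdist F u v \<in> ?D" using uv by blast
    then have "gdist F u v \<le> Max ?D" by (rule Max_ge[OF fD])
    then have le: "gdist F u v \<le> 2" using d unfolding diameter_def by simp
    have "\<exists>k. walk_of_len F u v k" using c uv by (simp add: connected_graph_def)
    then have "walk_of_len F u v (gdist F u v)" unfolding gdist_def by (rule LeastI_ex)
    from walk_len_le2[OF this le]
    show "u = v \<or> {u,v} \<in> edges F \<or> (\<exists>x\<in>verts F. {u,x}\<in>edges F \<and> {x,v}\<in>edges F)" .
  }
  have "2 \<in> ?D" using Max_in[OF fD neD] d unfolding diameter_def by simp
  then obtain u v where uv: "u \<in> verts F" "v \<in> verts F" "gdist F u v = 2" by auto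
  have "u \<noteq> v"
  proof
    assume "u = v"
    then have "walk_of_len F u v 0" using uv unfolding walk_of_len_def is_walk_def
      by (intro exI[of _ "[u]"]) auto
    then have "gdist F u v \<le> 0" by (rule walk_least)
    then show False using uv(3) by simp
  qed
  moreover have "{u,v} \<notin> edges F"
  proof
    assume e: "{u,v} \<in> edges F"
    have "walk_of_len F u v 1" using uv e unfolding walk_of_len_def is_walk_def
      by (intro exI[of _ "[u,v]"]) (auto simp: less_Suc_eq)
    then have "gdist F u v \<le> 1" by (rule walk_least)
    then show False using uv(3) by simp
  qed
  ultimately show "\<exists>u\<in>verts F. \<exists>v\<in>verts F. u \<noteq> v \<and> {u,v} \<notin> edges F" using uv by blast
qed

definition nbrs :: "'a sgraph \<Rightarrow> 'a \<Rightarrow> 'a set" where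
  "nbrs F w = {u \<in> verts F. {w,u} \<in> edges F}"

lemma F_basic:
  assumes s: "simple_graph F" and c: "connected_graph F" and d: "diameter F = 2"
  shows "1 \<le> min_degree F" "min_degree F + 2 \<le> card (verts F)"
    "\<exists>w\<in>verts F. card (nbrs F w) = min_degree F"
    "\<And>u. u \<in> verts F \<Longrightarrow> min_degree F \<le> card (nbrs F u)"
    "\<exists>a b. {a,b} \<in> edges F \<and> a \<noteq> b \<and> a \<in> verts F \<and> b \<in> verts F"
proof -
  have fV: "finite (verts F)" using s by (simp add: simple_graph_def)
  have ne: "verts F \<noteq> {}" using c by (simp add: connected_graph_def)
  have gd: "gdegree F u = card (nbrs F u)" for u by (simp add: gdegree_def nbrs_def)
  show le: "\<And>u. u \<in> verts F \<Longrightarrow> min_degree F \<le> card (nbrs F u)"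
  proof -
    fix u assume u: "u \<in> verts F"
    have "Min (gdegree F ` verts F) \<le> gdegree F u" using fV u by (intro Min_le) auto
    then show "min_degree F \<le> card (nbrs F u)" by (simp add: min_degree_def gd)
  qed
  show ex: "\<exists>w\<in>verts F. card (nbrs F w) = min_degree F"
  proof -
    have "Min (gdegree F ` verts F) \<in> gdegree F ` verts F" using fV ne by (intro Min_in) auto
    then show ?thesis by (auto simp: min_degree_def gd)
  qed
  obtain u v where uv: "u \<in> verts F" "v \<in> verts F" "u \<noteq> v" "{u,v} \<notin> edges F"
    using diam_facts(2)[OF s c d] by blast
  have "nbrs F u \<subseteq> verts F - {u,v}" using uv no_loop[OF s] by (auto simp: nbrs_def)
  then have "card (nbrs F u) \<le> card (verts F - {u,v})" using fV by (intro card_mono) auto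
  also have "\<dots> = card (verts F) - 2" using uv fV by (simp add: card_Diff_subset)
  finally have "card (nbrs F u) \<le> card (verts F) - 2" .
  moreover have "card {u,v} \<le> card (verts F)" using uv fV by (intro card_mono) auto
  then have "2 \<le> card (verts F)" using uv by simp
  ultimately show "min_degree F + 2 \<le> card (verts F)" using le[OF uv(1)] by linarith
  have nb: "nbrs F w \<noteq> {}" if w: "w \<in> verts F" for w
  proof -
    obtain v' where v': "v' \<in> verts F" "v' \<noteq> w" using uv by blast
    from diam_facts(1)[OF s c d w v'(1)] v' w show ?thesis by (auto simp: nbrs_def)
  qed
  obtain w where w: "w \<in> verts F" "card (nbrs F w) = min_degree F" using ex by blast
  have "finite (nbrs F w)" using fV by (simp add: nbrs_def)
  then have "0 < card (nbrs F w)" using nb[OF w(1)] by (simp add: card_gt_0_iff)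
  then show "1 \<le> min_degree F" using w by simp
  obtain x where "x \<in> verts F" "{u,x} \<in> edges F"
    using diam_facts(1)[OF s c d uv(1) uv(2)] uv by blast
  then show "\<exists>a b. {a,b} \<in> edges F \<and> a \<noteq> b \<and> a \<in> verts F \<and> b \<in> verts F"
  proof -
    have "u \<noteq> x" using no_loop[OF s] \<open>{u,x} \<in> edges F\<close> by auto
    then show ?thesis using \<open>{u,x} \<in> edges F\<close> \<open>x \<in> verts F\<close> uv(1) by blast
  qed
qed

lemma twol_notin[simp]: "2*(l::nat) \<notin> {1..2*l-1}"
  by (cases l) auto

lemma twol_notin'[simp]: "2*(l::nat) \<notin> {Suc 0..2*l-Suc 0}"
  by (cases l) auto

lemma Fg_edge_2l:
  assumes "{2*l, y} \<in> edges (F_graph l t)" "y \<noteq> 2*l"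
  shows "y \<in> {1..t}"
proof -
  have "{2*l, y} \<notin> edges (A_graph l)" unfolding A_edge_iff using twol_notin[of l] by blast
  then obtain j where "{2*l, y} = {2*l, j}" "j \<in> {1..t}" using assms(1) by (auto simp: edges_Fg)
  then show ?thesis using assms(2) by (auto simp: doubleton_eq_iff)
qed

lemma Fg_edge_A:
  assumes "{x, y} \<in> edges (F_graph l t)" "x \<noteq> 2*l" "y \<noteq> 2*l"
  shows "{x, y} \<in> edges (A_graph l)"
  using assms by (auto simp: edges_Fg doubleton_eq_iff)

lemma delta_split:
  fixes F :: "'a sgraph"
  assumes tl: "t < l"
  defines "Xf \<equiv> {H. subgraph_of H (F_graph l t) \<and> isomorphic F H \<and> l \<in> verts H}"
  defines "Xa \<equiv> {H. subgraph_of H (A_graph l) \<and> isomorphic F H \<and> l \<in> verts H}"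
  defines "Y \<equiv> {H. subgraph_of H (F_graph l t) \<and> isomorphic F H \<and> l \<in> verts H \<and> 2*l \<in> verts H}"
  shows "card Xf = card Xa + card Y"
proof -
  have fin: "finite Xf" unfolding Xf_def using finite_subgraphs[OF simple_Fg[OF tl]] by simp
  have "Xf = Xa \<union> Y"
  proof
    show "Xf \<subseteq> Xa \<union> Y"
    proof
      fix H assume H: "H \<in> Xf"
      show "H \<in> Xa \<union> Y"
      proof (cases "2*l \<in> verts H")
        case True then show ?thesis using H by (simp add: Xf_def Y_def)
      next
        case False
        have sub: "subgraph_of H (F_graph l t)" using H by (simp add: Xf_def)
        have "subgraph_of H (A_graph l)"
          unfolding subgraph_of_def
        proof (intro conjI)
          show "verts H \<subseteq> verts (A_graph l)" using sub False by (auto simp: subgraph_of_def)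
          show "\<forall>e\<in>edges H. e \<subseteq> verts H" using sub by (simp add: subgraph_of_def)
          show "edges H \<subseteq> edges (A_graph l)"
          proof
            fix e assume e: "e \<in> edges H"
            then have "e \<in> edges (F_graph l t)" "e \<subseteq> verts H" using sub by (auto simp: subgraph_of_def)
            then show "e \<in> edges (A_graph l)" using False by (auto simp: edges_Fg)
          qed
        qed
        then show ?thesis using H by (simp add: Xf_def Xa_def)
      qed
    qed
    show "Xa \<union> Y \<subseteq> Xf"
    proof
      fix H assume "H \<in> Xa \<union> Y"
      then show "H \<in> Xf"
        by (auto simp: Xa_def Y_def Xf_def subgraph_of_def edges_Fg)
    qed
  qed
  moreover have "Xa \<inter> Y = {}"
  proof -
    have "2*l \<notin> verts H" if "H \<in> Xa" for H
      using that twol_notin[of l] unfolding Xa_def subgraph_of_def verts_A by blast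
    then show ?thesis unfolding Y_def by blast
  qed
  ultimately show ?thesis using fin by (simp add: card_Un_disjoint)
qed

lemma A_edge_small:
  assumes "a \<in> {1..l}" "b \<in> {1..l}" "a \<noteq> b"
  shows "{a,b} \<in> edges (A_graph l)"
  using assms unfolding A_edge_iff by auto

lemma Y_nonempty:
  fixes F :: "'a sgraph"
  assumes s: "simple_graph F" and c: "connected_graph F" and d: "diameter F = 2"
    and nl: "card (verts F) < l"
  defines "t \<equiv> min_degree F"
  shows "\<exists>H. subgraph_of H (F_graph l t) \<and> isomorphic F H \<and> l \<in> verts H \<and> 2*l \<in> verts H"
proof -
  let ?n = "card (verts F)"
  have fV: "finite (verts F)" using s by (simp add: simple_graph_def)
  note fb = F_basic[OF s c d]
  obtain w where w: "w \<in> verts F" "card (nbrs F w) = t" using fb(3) t_def by blast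
  have t2: "t + 2 \<le> ?n" using fb(2) t_def by simp
  define N where "N = nbrs F w"
  define R where "R = verts F - insert w N"
  have NV: "N \<subseteq> verts F" by (auto simp: N_def nbrs_def)
  have wN: "w \<notin> N" using no_loop[OF s] by (auto simp: N_def nbrs_def)
  have fN: "finite N" using NV fV finite_subset by blast
  have fR: "finite R" using fV by (simp add: R_def)
  have cN: "card N = t" using w N_def by simp
  have "card R = ?n - card (insert w N)" unfolding R_def using NV w fV
    by (intro card_Diff_subset) (auto intro: finite_subset)
  then have cR: "card R = ?n - 1 - t" using cN wN fN by simp
  have "\<exists>h. bij_betw h N {1..t}" by (rule finite_same_card_bij) (simp_all add: fN cN)
  then obtain h1 where h1: "bij_betw h1 N {1..t}" by blast
  have "card {l+t+2-?n..l} = Suc l - (l+t+2-?n)" by simp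
  also have "\<dots> = ?n - 1 - t" using t2 nl by arith
  finally have cI: "card {l+t+2-?n..l} = ?n - 1 - t" .
  have "card R = card {l+t+2-?n..l}" using cR cI by simp
  from finite_same_card_bij[OF fR finite_atLeastAtMost this]
  have "\<exists>h. bij_betw h R {l+t+2-?n..l}" .
  then obtain h2 where h2: "bij_betw h2 R {l+t+2-?n..l}" by blast
  define \<phi> where "\<phi> = (\<lambda>x. if x = w then 2*l else if x \<in> N then h1 x else h2 x)"
  have h1r: "h1 x \<in> {1..t}" if "x \<in> N" for x using h1 that by (auto simp: bij_betw_def)
  have h2r: "h2 x \<in> {l+t+2-?n..l}" if "x \<in> R" for x using h2 that by (auto simp: bij_betw_def)
  have VF: "verts F = insert w (N \<union> R)" using w NV by (auto simp: R_def)
  have tl: "t < l" using t2 nl by simp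
  have rng: "\<phi> x \<in> {1..l}" if "x \<in> verts F" "x \<noteq> w" for x
  proof (cases "x \<in> N")
    case True then show ?thesis using h1r[OF True] tl that by (auto simp: \<phi>_def)
  next
    case False then have "x \<in> R" using that by (auto simp: R_def)
    then show ?thesis using h2r[of x] that False t2 nl by (auto simp: \<phi>_def)
  qed
  have inj: "inj_on \<phi> (verts F)"
  proof (rule inj_onI)
    fix x y assume x: "x \<in> verts F" and y: "y \<in> verts F" and eq: "\<phi> x = \<phi> y"
    show "x = y"
    proof (cases "x = w \<or> y = w")
      case True
      have l1: "l < 2*l" using tl by simp
      show ?thesis
      proof (rule ccontr)
        assume ne: "x \<noteq> y"
        show False
        proof (cases "x = w")
          case True
          then have "y \<noteq> w" using ne by simp
          then have "\<phi> y \<le> l" using rng[OF y] by simp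
          moreover have "\<phi> x = 2*l" using True by (simp add: \<phi>_def)
          ultimately show False using eq l1 by simp
        next
          case False
          then have yw: "y = w" using True by simp
          have "\<phi> x \<le> l" using rng[OF x False] by simp
          moreover have "\<phi> y = 2*l" using yw by (simp add: \<phi>_def)
          ultimately show False using eq l1 by simp
        qed
      qed
    next
      case False
      then have xw: "x \<noteq> w" and yw: "y \<noteq> w" by auto
      consider "x \<in> N" "y \<in> N" | "x \<in> N" "y \<in> R" | "x \<in> R" "y \<in> N" | "x \<in> R" "y \<in> R"
        using x y xw yw VF by blast
      then show ?thesis
      proof cases
        case 1 then show ?thesis using eq xw yw h1 by (auto simp: \<phi>_def bij_betw_def inj_on_def)
      next
        case 2
        then have "\<phi> x \<in> {1..t}" "\<phi> y \<in> {l+t+2-?n..l}" using h1r h2r xw yw wN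
          by (auto simp: \<phi>_def R_def)
        then show ?thesis using eq t2 nl by auto
      next
        case 3
        then have "\<phi> y \<in> {1..t}" "\<phi> x \<in> {l+t+2-?n..l}" using h1r h2r xw yw wN
          by (auto simp: \<phi>_def R_def)
        then show ?thesis using eq t2 nl by auto
      next
        case 4
        then have "x \<notin> N" "y \<notin> N" by (auto simp: R_def)
        then show ?thesis using 4 eq xw yw h2 by (auto simp: \<phi>_def bij_betw_def inj_on_def)
      qed
    qed
  qed
  have em: "emb F (F_graph l t) \<phi>"
    unfolding emb_def
  proof (intro conjI ballI inj)
    show "\<phi> ` verts F \<subseteq> verts (F_graph l t)"
    proof
      fix z assume "z \<in> \<phi> ` verts F"
      then obtain x where x: "x \<in> verts F" "z = \<phi> x" by blast
      show "z \<in> verts (F_graph l t)"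
        using rng[OF x(1)] x tl by (cases "x = w") (auto simp: \<phi>_def)
    qed
    fix e assume e: "e \<in> edges F"
    then obtain x y where xy: "e = {x,y}" "x \<noteq> y" "x \<in> verts F" "y \<in> verts F"
      using s unfolding simple_graph_def by (metis card2_edge insert_subset)
    have ex: "\<phi> ` e = {\<phi> x, \<phi> y}" using xy by simp
    show "\<phi> ` e \<in> edges (F_graph l t)"
    proof (cases "x = w \<or> y = w")
      case True
      then obtain u where u: "{w,u} = e" "u \<noteq> w" "u \<in> verts F" using xy by auto
      then have uN: "u \<in> N" using e by (auto simp: N_def nbrs_def)
      have "\<phi> ` e = {2*l, h1 u}" using u uN wN by (auto simp: \<phi>_def)
      then show ?thesis using h1r[OF uN] by (auto simp: edges_Fg)
    next
      case False
      then have "{\<phi> x, \<phi> y} \<in> edges (A_graph l)"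
        using rng xy inj by (intro A_edge_small) (auto simp: inj_on_def)
      then show ?thesis using ex by (simp add: edges_Fg)
    qed
  qed
  have "R \<noteq> {}" using cR t2 by auto
  then obtain r where "r \<in> R" by blast
  have "l \<in> h2 ` R" using h2 t2 nl by (auto simp: bij_betw_def)
  then have lin: "l \<in> \<phi> ` verts F" using VF wN by (force simp: \<phi>_def R_def)
  have win: "2*l \<in> \<phi> ` verts F" using w by (auto simp: \<phi>_def)
  have "subgraph_of (gmap \<phi> F) (F_graph l t) \<and> isomorphic F (gmap \<phi> F)"
    using copies_char[OF s card2_Fg[OF tl], of "gmap \<phi> F"] em by blast
  then show ?thesis using lin win by (intro exI[of _ "gmap \<phi> F"]) simp
qed

lemma Y_bound:
  fixes F :: "'a sgraph"
  assumes s: "simple_graph F" and c: "connected_graph F" and d: "diameter F = 2"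
    and nl: "card (verts F) < l"
  defines "t \<equiv> min_degree F"
  defines "n \<equiv> card (verts F)"
  defines "Y \<equiv> {H. subgraph_of H (F_graph l t) \<and> isomorphic F H \<and> l \<in> verts H \<and> 2*l \<in> verts H}"
  shows "card Y \<le> fact n * ((l-2) choose (n-t-2))"
proof -
  have fV: "finite (verts F)" using s by (simp add: simple_graph_def)
  note fb = F_basic[OF s c d]
  have t1: "1 \<le> t" using fb(1) t_def by simp
  have t2: "t + 2 \<le> n" using fb(2) t_def n_def by simp
  have tl: "t < l" using t2 nl n_def by simp
  define K where "K = insert l (insert (2*l) {1..t})"
  define U where "U = {t+1..t+l-1} - {l}"
  define TT where "TT = {T. T \<subseteq> U \<and> card T = n-t-2}"
  define Q where "Q = (\<lambda>T. {H. subgraph_of H (F_graph l t) \<and> isomorphic F H \<and> verts H = K \<union> T})"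
  have cK: "card K = t + 2" using tl by (simp add: K_def)
  have KU: "K \<inter> U = {}" using tl by (auto simp: K_def U_def)
  have fU: "finite U" by (simp add: U_def)
  have "card {t+1..t+l-1} = l - 1" using tl by simp
  moreover have "l \<in> {t+1..t+l-1}" using tl t1 by simp
  ultimately have cU: "card U = l - 2" unfolding U_def by (simp add: card_Diff_singleton)
  have cTT: "card TT = (l-2) choose (n-t-2)" unfolding TT_def using n_subsets[OF fU] cU by simp
  have fTT: "finite TT" unfolding TT_def using fU by simp
  have sub1: "Y \<subseteq> (\<Union>T\<in>TT. Q T)"
  proof
    fix H assume HY: "H \<in> Y"
    then have H1: "subgraph_of H (F_graph l t) \<and> isomorphic F H" and lH: "l \<in> verts H"
      and wH: "2*l \<in> verts H" by (auto simp: Y_def)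
    obtain \<phi> where em: "emb F (F_graph l t) \<phi>" and H: "H = gmap \<phi> F"
      using copies_char[OF s card2_Fg[OF tl]] H1 by blast
    have inj: "inj_on \<phi> (verts F)" using em by (simp add: emb_def)
    have eE: "\<phi> ` e \<in> edges (F_graph l t)" if "e \<in> edges F" for e
      using em that by (simp add: emb_def)
    obtain w where w: "w \<in> verts F" "\<phi> w = 2*l" using wH H by auto
    have nb: "\<phi> u \<in> {1..t}" if u: "u \<in> nbrs F w" for u
    proof -
      have uV: "u \<in> verts F" and e: "{w,u} \<in> edges F" using u by (auto simp: nbrs_def)
      have "u \<noteq> w" using e no_loop[OF s] by auto
      then have "\<phi> u \<noteq> 2*l" using inj w uV by (metis inj_on_contraD)
      moreover have "{2*l, \<phi> u} \<in> edges (F_graph l t)" using eE[OF e] w by simp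
      ultimately show ?thesis using Fg_edge_2l by blast
    qed
    have fnb: "finite (nbrs F w)" using fV by (simp add: nbrs_def)
    have "card (\<phi> ` nbrs F w) = card (nbrs F w)"
      using inj by (intro card_image) (auto intro: inj_on_subset simp: nbrs_def)
    also have "\<dots> \<ge> t" using fb(4)[OF w(1)] t_def by simp
    finally have "card {1..t} \<le> card (\<phi> ` nbrs F w)" by simp
    moreover have "\<phi> ` nbrs F w \<subseteq> {1..t}" using nb by blast
    ultimately have nbeq: "\<phi> ` nbrs F w = {1..t}" by (intro card_seteq) auto
    have "{1..t} \<subseteq> verts H" unfolding H nbeq[symmetric] by (auto simp: nbrs_def)
    then have KH: "K \<subseteq> verts H" using lH wH by (simp add: K_def)
    have far: "\<phi> y \<in> {1..t+l-1}" if y: "y \<in> verts F" "y \<noteq> w" for y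
    proof -
      have "\<phi> y \<noteq> 2*l" using inj w y by (metis inj_on_contraD)
      from diam_facts(1)[OF s c d w(1) y(1)] y(2)
      consider "{w,y} \<in> edges F" | x where "x \<in> verts F" "{w,x} \<in> edges F" "{x,y} \<in> edges F"
        by blast
      then show ?thesis
      proof cases
        case 1
        then have "\<phi> y \<in> {1..t}" using nb y by (simp add: nbrs_def)
        then show ?thesis using tl by auto
      next
        case 2
        then have px: "\<phi> x \<in> {1..t}" using nb by (simp add: nbrs_def)
        have "{\<phi> x, \<phi> y} \<in> edges (F_graph l t)" using eE[OF 2(3)] by simp
        moreover have "\<phi> x \<noteq> 2*l" using px tl by auto
        ultimately have "{\<phi> x, \<phi> y} \<in> edges (A_graph l)"
          using Fg_edge_A \<open>\<phi> y \<noteq> 2*l\<close> by blast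
        then have "\<phi> y - \<phi> x \<le> l - 1" "1 \<le> \<phi> y" unfolding A_edge_iff by auto
        then have "\<phi> y \<le> \<phi> x + (l - 1)" "1 \<le> \<phi> y" by arith+
        moreover have "\<phi> x \<le> t" using px by simp
        ultimately show ?thesis using tl by simp
      qed
    qed
    define T where "T = verts H - K"
    have TU: "T \<subseteq> U"
    proof
      fix v assume v: "v \<in> T"
      then obtain y where y: "y \<in> verts F" "v = \<phi> y" by (auto simp: T_def H)
      have "v \<noteq> 2*l" "v \<noteq> l" "v \<notin> {1..t}" using v by (auto simp: T_def K_def)
      then have "y \<noteq> w" using w y by auto
      then show "v \<in> U" using far[OF y(1)] y \<open>v \<noteq> l\<close> \<open>v \<notin> {1..t}\<close> by (auto simp: U_def)
    qed
    have cH: "card (verts H) = n" unfolding H n_def using inj by (simp add: card_image)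
    have fH: "finite (verts H)" unfolding H using fV by simp
    have "card T = n - t - 2" unfolding T_def using cH cK by (simp add: card_Diff_subset[OF finite_subset[OF KH fH] KH])
    then have "T \<in> TT" using TU by (simp add: TT_def)
    moreover have "verts H = K \<union> T" using KH by (auto simp: T_def)
    ultimately show "H \<in> (\<Union>T\<in>TT. Q T)" using H1 by (auto simp: Q_def)
  qed
  have fin: "finite (\<Union>T\<in>TT. Q T)"
  proof (rule finite_subset)
    show "(\<Union>T\<in>TT. Q T) \<subseteq> {H. subgraph_of H (F_graph l t) \<and> True}" by (auto simp: Q_def)
    show "finite {H. subgraph_of H (F_graph l t) \<and> True}" by (rule finite_subgraphs[OF simple_Fg[OF tl]])
  qed
  have Qb: "card (Q T) \<le> fact n" if T: "T \<in> TT" for T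
  proof -
    have TU: "T \<subseteq> U" and cT: "card T = n - t - 2" using T by (auto simp: TT_def)
    have fT: "finite T" using TU fU finite_subset by blast
    have fKT: "finite (K \<union> T)" using fT by (simp add: K_def)
    have "K \<inter> T = {}" using KU TU by blast
    then have "card (K \<union> T) = card K + card T" using fT by (intro card_Un_disjoint) (auto simp: K_def)
    then have cKT: "card (K \<union> T) = n" using cK cT t2 by simp
    show ?thesis unfolding Q_def
      using copies_fixed_verts[OF s card2_Fg[OF tl] fKT] cKT n_def by simp
  qed
  have "card Y \<le> card (\<Union>T\<in>TT. Q T)" using sub1 fin by (rule card_mono[rotated])
  also have "\<dots> \<le> (\<Sum>T\<in>TT. card (Q T))" using fTT by (rule card_UN_le)
  also have "\<dots> \<le> card TT * fact n" using sum_bounded_above[of TT "\<lambda>T. card (Q T)" "fact n"] Qb by simp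
  also have "\<dots> = fact n * ((l-2) choose (n-t-2))" using cTT by simp
  finally show ?thesis .
qed

lemma gmap_id: "gmap id H = H"
  by (rule sgraph_eq) simp_all

lemma A_edge_window:
  assumes "a \<in> {Suc i..i+l}" "b \<in> {Suc i..i+l}" "a \<noteq> b" "i + 1 \<le> l"
  shows "{a,b} \<in> edges (A_graph l)"
  using assms unfolding A_edge_iff by auto

lemma sw_edge:
  fixes i l :: nat
  defines "sw \<equiv> (\<lambda>x. if x = i then Suc i else if x = Suc i then i else x)"
  assumes e: "{a,b} \<in> edges (A_graph l)" and a: "a \<noteq> Suc i" and b: "b \<noteq> Suc i"
    and i: "1 \<le> i" "i + 1 \<le> l"
  shows "{sw a, sw b} \<in> edges (A_graph l)"
proof -
  have E: "a \<in> {1..2*l-1}" "b \<in> {1..2*l-1}" "a \<noteq> b" "a - b \<le> l - 1" "b - a \<le> l - 1"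
    using e unfolding A_edge_iff by auto
  show ?thesis
    unfolding A_edge_iff sw_def using E a b i by auto
qed

lemma z_diff:
  fixes F :: "'a sgraph"
  assumes s: "simple_graph F" and ab: "{a,b} \<in> edges F" "a \<noteq> b" "a \<in> verts F" "b \<in> verts F"
    and i: "1 \<le> i" "i + 1 \<le> l"
  defines "X \<equiv> (\<lambda>v. {H. subgraph_of H (A_graph l) \<and> isomorphic F H \<and> v \<in> verts H})"
  shows "card (X i) + ((l-2) choose (card (verts F) - 2)) \<le> card (X (Suc i))"
proof -
  let ?n = "card (verts F)"
  define sw where "sw = (\<lambda>x::nat. if x = i then Suc i else if x = Suc i then i else x)"
  have swsw: "sw (sw x) = x" for x by (simp add: sw_def)
  have swc: "sw \<circ> sw = id" using swsw by auto
  have injsw: "inj sw" by (metis swsw injI)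
  have fV: "finite (verts F)" using s by (simp add: simple_graph_def)
  note cc = copies_char[OF s card2_A]
  have finX: "finite (X v)" for v unfolding X_def using finite_subgraphs[OF simple_A] by simp
  define P where "P = X i \<inter> X (Suc i)"
  define M where "M = X i - X (Suc i)"
  define New where "New = {H \<in> X (Suc i). {Suc i, i+l} \<in> edges H \<and> i \<notin> verts H}"
  
  have Mimg: "gmap sw H \<in> X (Suc i) \<and> i \<notin> verts (gmap sw H) \<and> {Suc i, i+l} \<notin> edges (gmap sw H)"
    if HM: "H \<in> M" for H
  proof -
    have H1: "subgraph_of H (A_graph l) \<and> isomorphic F H" and iH: "i \<in> verts H"
      and i1H: "Suc i \<notin> verts H" using HM by (auto simp: M_def X_def)
    obtain \<phi> where em: "emb F (A_graph l) \<phi>" and H: "H = gmap \<phi> F" using cc H1 by blast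
    have em2: "emb F (A_graph l) (sw \<circ> \<phi>)"
      unfolding emb_def
    proof (intro conjI ballI)
      show "inj_on (sw \<circ> \<phi>) (verts F)" using em injsw
        by (simp add: emb_def comp_inj_on inj_on_subset)
      show "(sw \<circ> \<phi>) ` verts F \<subseteq> verts (A_graph l)"
      proof
        fix z assume "z \<in> (sw \<circ> \<phi>) ` verts F"
        then obtain x where x: "x \<in> verts F" "z = sw (\<phi> x)" by auto
        have "\<phi> x \<in> {1..2*l-1}" using em x by (auto simp: emb_def)
        then show "z \<in> verts (A_graph l)" using x i by (auto simp: sw_def)
      qed
      fix e assume e: "e \<in> edges F"
      then have pe: "\<phi> ` e \<in> edges (A_graph l)" using em by (simp add: emb_def)
      then obtain p q where pq: "\<phi> ` e = {p,q}" using A_edge_cases by blast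
      have "e \<subseteq> verts F" using s e by (simp add: simple_graph_def)
      then have "\<phi> ` e \<subseteq> verts H" using H by auto
      then have "p \<noteq> Suc i" "q \<noteq> Suc i" using pq i1H by auto
      then have "{sw p, sw q} \<in> edges (A_graph l)"
        using sw_edge[of p q l i] pe pq i unfolding sw_def by simp
      moreover have "(sw \<circ> \<phi>) ` e = sw ` (\<phi> ` e)" by (rule image_comp[symmetric])
      then have "(sw \<circ> \<phi>) ` e = {sw p, sw q}" using pq by simp
      ultimately show "(sw \<circ> \<phi>) ` e \<in> edges (A_graph l)" by simp
    qed
    have G: "gmap sw H = gmap (sw \<circ> \<phi>) F" using H gmap_comp by simp
    have "subgraph_of (gmap sw H) (A_graph l) \<and> isomorphic F (gmap sw H)"
      using cc em2 G by blast
    moreover have "Suc i \<in> verts (gmap sw H)" using iH by (force simp: sw_def)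
    moreover have "i \<notin> verts (gmap sw H)"
    proof
      assume "i \<in> verts (gmap sw H)"
      then obtain y where "y \<in> verts H" "sw y = i" by auto
      then have "y = Suc i" by (auto simp: sw_def split: if_splits)
      then show False using i1H \<open>y \<in> verts H\<close> by simp
    qed
    moreover have "{Suc i, i+l} \<notin> edges (gmap sw H)"
    proof
      assume "{Suc i, i+l} \<in> edges (gmap sw H)"
      then obtain e where e: "e \<in> edges H" "sw ` e = {Suc i, i+l}" by auto
      have "e = sw ` (sw ` e)" by (simp add: image_comp swc)
      also have "\<dots> = {i, sw (i+l)}" using e(2) by (simp add: sw_def)
      finally have "e = {i, sw (i+l)}" .
      have "e \<in> edges (A_graph l)" using e H1 by (auto simp: subgraph_of_def)
      have "sw (i+l) = i + l" using i by (simp add: sw_def)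
      then show False using \<open>e = {i, sw (i+l)}\<close> \<open>e \<in> edges (A_graph l)\<close> by (simp add: A_edge_iff) linarith
    qed
    ultimately show ?thesis by (simp add: X_def)
  qed
  
  define TT where "TT = {T. T \<subseteq> {i+2..i+l-1} \<and> card T = ?n - 2}"
  have TTsub: "TT \<subseteq> (\<lambda>H. verts H - {Suc i, i+l}) ` New"
  proof
    fix T assume T: "T \<in> TT"
    then have TW: "T \<subseteq> {i+2..i+l-1}" and cT: "card T = ?n - 2" by (auto simp: TT_def)
    have fT: "finite T" using TW finite_subset by blast
    have "card (verts F - {a,b}) = ?n - 2" using ab fV by (simp add: card_Diff_subset)
    then have "card (verts F - {a,b}) = card T" using cT by simp
    from finite_same_card_bij[OF _ fT this] fV
    obtain h where h: "bij_betw h (verts F - {a,b}) T" by auto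
    define \<phi> where "\<phi> = (\<lambda>x. if x = a then Suc i else if x = b then i + l else h x)"
    have hr: "h x \<in> T" if "x \<in> verts F - {a,b}" for x using h that by (auto simp: bij_betw_def)
    have rng: "\<phi> x \<in> {Suc i..i+l}" if x: "x \<in> verts F" for x
    proof (cases "x = a \<or> x = b")
      case True then show ?thesis using i ab(2) by (auto simp: \<phi>_def)
    next
      case False
      then have "h x \<in> {i+2..i+l-1}" using hr[of x] x TW by auto
      then show ?thesis using False by (auto simp: \<phi>_def)
    qed
    have lge: "2 \<le> l" using i by simp
    have va: "\<phi> a = Suc i" by (simp add: \<phi>_def)
    have vb: "\<phi> b = i + l" using ab(2) by (simp add: \<phi>_def)
    have vo: "\<phi> x = h x" "h x \<in> {i+2..i+l-1}" if "x \<in> verts F" "x \<noteq> a" "x \<noteq> b" for x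
      using that hr[of x] TW by (auto simp: \<phi>_def)
    have inj: "inj_on \<phi> (verts F)"
    proof (rule inj_onI)
      fix x y assume x: "x \<in> verts F" and y: "y \<in> verts F" and eq: "\<phi> x = \<phi> y"
      show "x = y"
      proof (cases "x \<in> {a,b}")
        case xin: True
        show ?thesis
        proof (cases "y \<in> {a,b}")
          case True
          have "Suc i \<noteq> i + l" using lge by simp
          then show ?thesis using xin True eq va vb by auto
        next
          case False
          then have "\<phi> y \<in> {i+2..i+l-1}" using vo[OF y] by auto
          then have "\<phi> y \<noteq> Suc i" "\<phi> y \<noteq> i + l" by auto
          moreover have "\<phi> x = Suc i \<or> \<phi> x = i + l" using xin va vb by auto
          ultimately show ?thesis using eq by auto
        qed
      next
        case xout: False
        then have px: "\<phi> x \<in> {i+2..i+l-1}" using vo[OF x] by auto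
        show ?thesis
        proof (cases "y \<in> {a,b}")
          case True
          then have "\<phi> y = Suc i \<or> \<phi> y = i + l" using va vb by auto
          then show ?thesis using px eq by auto
        next
          case False
          then have "h x = h y" using vo[OF x] vo[OF y] xout eq by auto
          moreover have "inj_on h (verts F - {a,b})" using h by (rule bij_betw_imp_inj_on)
          ultimately show ?thesis using x y xout False by (meson DiffI inj_onD)
        qed
      qed
    qed
    have em: "emb F (A_graph l) \<phi>"
      unfolding emb_def
    proof (intro conjI ballI inj)
      show "\<phi> ` verts F \<subseteq> verts (A_graph l)" using rng i by fastforce
      fix e assume e: "e \<in> edges F"
      then obtain x y where xy: "e = {x,y}" "x \<noteq> y" "x \<in> verts F" "y \<in> verts F"
        using s unfolding simple_graph_def by (metis card2_edge insert_subset)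
      have "\<phi> x \<noteq> \<phi> y" using inj xy by (metis inj_on_contraD)
      then have "{\<phi> x, \<phi> y} \<in> edges (A_graph l)" using rng xy i by (intro A_edge_window) auto
      then show "\<phi> ` e \<in> edges (A_graph l)" using xy by simp
    qed
    define H where "H = gmap \<phi> F"
    have H1: "subgraph_of H (A_graph l) \<and> isomorphic F H" using cc em H_def by blast
    have VF: "verts F = {a,b} \<union> (verts F - {a,b})" using ab by auto
    have "\<phi> ` (verts F - {a,b}) = h ` (verts F - {a,b})" by (auto simp: \<phi>_def)
    also have "\<dots> = T" using h by (simp add: bij_betw_def)
    finally have "\<phi> ` verts F = \<phi> ` {a,b} \<union> T" using VF by (metis image_Un)
    then have "\<phi> ` verts F = {Suc i, i+l} \<union> T" using va vb by simp
    then have vH: "verts H = {Suc i, i+l} \<union> T" by (simp add: H_def)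
    have eqab: "{Suc i, i+l} = \<phi> ` {a,b}" using va vb by simp
    have eH: "{Suc i, i+l} \<in> edges H" unfolding H_def edges_gmap by (rule rev_image_eqI[where f="\<lambda>e. \<phi> ` e", OF ab(1) eqab])
    have "i \<notin> verts H" using vH TW lge by auto
    then have "H \<in> New" using H1 vH eH by (simp add: New_def X_def)
    moreover have "verts H - {Suc i, i+l} = T" using vH TW lge by force
    ultimately show "T \<in> (\<lambda>H. verts H - {Suc i, i+l}) ` New" by (intro rev_image_eqI) auto
  qed
  have finNew: "finite New" using finX[of "Suc i"] by (simp add: New_def)
  have "card TT \<le> card New"
    using card_mono[OF finite_imageI[OF finNew] TTsub] card_image_le[OF finNew, of "\<lambda>H. verts H - {Suc i, i+l}"] by linarith
  moreover have "card TT = (l-2) choose (?n - 2)"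
  proof -
    have "card {i+2..i+l-1} = l - 2" by simp
    then show ?thesis unfolding TT_def using n_subsets[of "{i+2..i+l-1}" "?n - 2"] by simp
  qed
  ultimately have cNew: "(l-2) choose (?n - 2) \<le> card New" by simp
  
  have injg: "inj_on (gmap sw) M"
  proof (rule inj_onI)
    fix x y assume "gmap sw x = gmap sw y"
    then have "gmap sw (gmap sw x) = gmap sw (gmap sw y)" by simp
    then show "x = y" by (simp add: gmap_comp swc gmap_id)
  qed
  have sub: "P \<union> gmap sw ` M \<union> New \<subseteq> X (Suc i)"
    using Mimg by (auto simp: P_def New_def)
  have d1: "P \<inter> gmap sw ` M = {}" using Mimg by (auto simp: P_def X_def)
  have d2: "(P \<union> gmap sw ` M) \<inter> New = {}" using Mimg by (auto simp: P_def New_def X_def)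
  have fP: "finite P" using finX by (simp add: P_def)
  have fM: "finite M" using finX by (simp add: M_def)
  have "card (X i) = card P + card M"
  proof -
    have "X i = P \<union> M" "P \<inter> M = {}" by (auto simp: P_def M_def)
    then show ?thesis using fP fM by (simp add: card_Un_disjoint)
  qed
  also have "\<dots> = card P + card (gmap sw ` M)" using injg by (simp add: card_image)
  also have "\<dots> = card (P \<union> gmap sw ` M)" using d1 fP fM by (simp add: card_Un_disjoint)
  finally have "card (X i) + card New = card (P \<union> gmap sw ` M \<union> New)"
    using d2 fP fM finNew by (simp add: card_Un_disjoint)
  also have "\<dots> \<le> card (X (Suc i))" using sub finX by (intro card_mono) auto
  finally show ?thesis using cNew by linarith
qed

theorem lemma10:
  fixes F :: "'a sgraph" and l :: nat
  defines "n \<equiv> card (verts F)"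
  defines "t \<equiv> min_degree F"
  defines "z \<equiv> \<lambda>i. int (Fdeg F (A_graph l) i)"
  defines "f \<equiv> \<lambda>i. int (Fdeg F (F_graph l t) i)"
  defines "\<delta> \<equiv> \<lambda>i. f i - z i"
  assumes "simple_graph F"
    and "connected_graph F"
    and "diameter F = 2"
    and "l > n"
    and "Cb (int l - 2) (int n - 2) > fact n * Cb (int l - 2) (int n - int t - 2)"
  shows "\<forall>i \<in> {t+1..l-1}. 0 < \<delta> l \<and> \<delta> l < z (i+1) - z i"
proof -
  note s = assms(6) and c = assms(7) and d = assms(8) and nl = assms(9) and hyp = assms(10)
  note fb = F_basic[OF s c d]
  have t1: "1 \<le> t" using fb(1) t_def by simp
  have t2: "t + 2 \<le> n" using fb(2) t_def n_def by simp
  have tl: "t < l" using t2 nl by simp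
  define Y where "Y = {H. subgraph_of H (F_graph l t) \<and> isomorphic F H \<and> l \<in> verts H \<and> 2*l \<in> verts H}"
  have split: "Fdeg F (F_graph l t) l = Fdeg F (A_graph l) l + card Y"
    unfolding Fdeg_def Y_def by (rule delta_split[OF tl])
  have dl: "\<delta> l = int (card Y)" unfolding \<delta>_def f_def z_def using split by simp
  have finY: "finite Y" unfolding Y_def using finite_subgraphs[OF simple_Fg[OF tl]] by simp
  have nl': "card (verts F) < l" using nl n_def by simp
  obtain H0 where "subgraph_of H0 (F_graph l t) \<and> isomorphic F H0 \<and> l \<in> verts H0 \<and> 2*l \<in> verts H0"
    using Y_nonempty[OF s c d nl'] unfolding t_def by blast
  then have "Y \<noteq> {}" unfolding Y_def by blast
  then have Ypos: "0 < card Y" using finY by (simp add: card_gt_0_iff)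
  have Yb: "card Y \<le> fact n * ((l-2) choose (n-t-2))"
    using Y_bound[OF s c d nl'] unfolding Y_def t_def n_def by simp
  have cb1: "Cb (int l - 2) (int n - 2) = (l-2) choose (n-2)"
  proof -
    have "nat (int l - 2) = l - 2" "nat (int n - 2) = n - 2" by auto
    moreover have "0 \<le> int n - 2" "int n - 2 \<le> int l - 2" using t2 nl by auto
    ultimately show ?thesis by (simp add: Cb_def)
  qed
  have cb2: "Cb (int l - 2) (int n - int t - 2) = (l-2) choose (n-t-2)"
  proof -
    have "nat (int l - 2) = l - 2" "nat (int n - int t - 2) = n - t - 2" using t2 by auto
    moreover have "0 \<le> int n - int t - 2" "int n - int t - 2 \<le> int l - 2" using t2 nl by auto
    ultimately show ?thesis by (simp add: Cb_def)
  qed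
  have key: "card Y < (l-2) choose (n-2)" using Yb hyp cb1 cb2 by simp
  obtain a b where ab: "{a,b} \<in> edges F" "a \<noteq> b" "a \<in> verts F" "b \<in> verts F" using fb(5) by blast
  show ?thesis
  proof
    fix i assume i: "i \<in> {t+1..l-1}"
    then have i1: "1 \<le> i" "i + 1 \<le> l" using t1 tl by auto
    have "Fdeg F (A_graph l) i + ((l-2) choose (n-2)) \<le> Fdeg F (A_graph l) (Suc i)"
      unfolding Fdeg_def n_def by (rule z_diff[OF s ab i1])
    then have "int ((l-2) choose (n-2)) \<le> z (i+1) - z i" unfolding z_def by simp
    then show "0 < \<delta> l \<and> \<delta> l < z (i+1) - z i" using dl Ypos key by simp
  qed
qed

end
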